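(* Let $A$ be a non-empty set, $I$ a non-empty index set, $\{V_i\}_{i\in I}\subseteq\mathcal R(A)$, ${\cal A}=(A,I,V_i)$, and let $E,F$ be fuzzy equivalences on $A$ with $E\le F$. Then the fuzzy relation $F/E$ on $A/E$ given by $F/E(E_{a_1},E_{a_2})=F(a_1,a_2)$ for all $a_1,a_2\in A$ is a well-defined fuzzy equivalence on $A/E$, and the quotient fuzzy relational systems $({\cal A}/E)/(F/E)$ and ${\cal A}/F$ are isomorphic.
   Context: $\mathcal L=(L,\wedge,\vee,\otimes,\to,0,1)$ is a complete residuated lattice. For a non-empty set $X$, $\mathcal R(X)$ is the set of fuzzy relations $X\times X\to L$, ordered pointwise; $(R\circ S)(x,z)=\bigvee_{y}R(x,y)\otimes S(y,z)$. A fuzzy equivalence $E$ on $X$ is reflexive ($E(x,x)=1$), symmetric and transitive ($E(x,y)\otimes E(y,z)\le E(x,z)$). $E_x(y)=E(x,y)$ and $X/E=\{E_x:x\in X\}$. A fuzzy relational system is ${\cal X}=(X,I,V_i)$ with $\{V_i\}_{i\in I}\subseteq\mathcal R(X)$; its quotient with respect to a fuzzy equivalence $E$ is ${\cal X}/E=(X/E,I,V_i^{X/E})$ where $V_i^{X/E}(E_{x_1},E_{x_2})=(E\circ V_i\circ E)(x_1,x_2)$ (well defined). Two systems $(X,I,V_i)$, $(Y,I,W_i)$ are isomorphic if there is a bijection $\varphi:X\to Y$ with $V_i(x_1,x_2)=W_i(\varphi(x_1),\varphi(x_2))$ for all $x_1,x_2\in X$, $i\in I$. *)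

theory Defs
  imports Main
begin

text \<open>Complete residuated lattice: the carrier is a type of class complete_lattice
 (so 0 = bot, 1 = top, meet/join = inf/sup); tens is the monoid operation and res the residuum.\<close>

definition complete_residuated_lattice ::
  "('l::complete_lattice \<Rightarrow> 'l \<Rightarrow> 'l) \<Rightarrow> ('l \<Rightarrow> 'l \<Rightarrow> 'l) \<Rightarrow> bool" where
  "complete_residuated_lattice tens res \<longleftrightarrow>
     (\<forall>a b c. tens (tens a b) c = tens a (tens b c)) \<and>
     (\<forall>a b. tens a b = tens b a) \<and>
     (\<forall>a. tens a top = a) \<and>
     (\<forall>a b c. tens a b \<le> c \<longleftrightarrow> a \<le> res b c)"

definition rcomp :: "('l::complete_lattice \<Rightarrow> 'l \<Rightarrow> 'l) \<Rightarrow> 'a set \<Rightarrow>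
    ('a \<Rightarrow> 'a \<Rightarrow> 'l) \<Rightarrow> ('a \<Rightarrow> 'a \<Rightarrow> 'l) \<Rightarrow> 'a \<Rightarrow> 'a \<Rightarrow> 'l" where
  "rcomp tens X R S x z = (SUP y\<in>X. tens (R x y) (S y z))"

definition fuzzy_equivalence :: "('l::complete_lattice \<Rightarrow> 'l \<Rightarrow> 'l) \<Rightarrow> 'a set \<Rightarrow>
    ('a \<Rightarrow> 'a \<Rightarrow> 'l) \<Rightarrow> bool" where
  "fuzzy_equivalence tens X E \<longleftrightarrow>
     (\<forall>x\<in>X. E x x = top) \<and>
     (\<forall>x\<in>X. \<forall>y\<in>X. E x y = E y x) \<and>
     (\<forall>x\<in>X. \<forall>y\<in>X. \<forall>z\<in>X. tens (E x y) (E y z) \<le> E x z)"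

definition fclass :: "'a set \<Rightarrow> ('a \<Rightarrow> 'a \<Rightarrow> 'l::complete_lattice) \<Rightarrow> 'a \<Rightarrow> ('a \<Rightarrow> 'l)" where
  "fclass X E x = (\<lambda>y. if y \<in> X then E x y else bot)"

definition fquot :: "'a set \<Rightarrow> ('a \<Rightarrow> 'a \<Rightarrow> 'l::complete_lattice) \<Rightarrow> ('a \<Rightarrow> 'l) set" where
  "fquot X E = fclass X E ` X"

definition frep :: "'a set \<Rightarrow> ('a \<Rightarrow> 'a \<Rightarrow> 'l::complete_lattice) \<Rightarrow> ('a \<Rightarrow> 'l) \<Rightarrow> 'a" where
  "frep X E C = (SOME x. x \<in> X \<and> fclass X E x = C)"

text \<open>Quotient relation V^{X/E}(E_x1, E_x2) = (E o V o E)(x1, x2).\<close>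
definition qrel :: "('l::complete_lattice \<Rightarrow> 'l \<Rightarrow> 'l) \<Rightarrow> 'a set \<Rightarrow> ('a \<Rightarrow> 'a \<Rightarrow> 'l) \<Rightarrow>
    ('a \<Rightarrow> 'a \<Rightarrow> 'l) \<Rightarrow> ('a \<Rightarrow> 'l) \<Rightarrow> ('a \<Rightarrow> 'l) \<Rightarrow> 'l" where
  "qrel tens X E V C1 C2 = rcomp tens X (rcomp tens X E V) E (frep X E C1) (frep X E C2)"

definition frel_quot :: "'a set \<Rightarrow> ('a \<Rightarrow> 'a \<Rightarrow> 'l::complete_lattice) \<Rightarrow> ('a \<Rightarrow> 'a \<Rightarrow> 'l) \<Rightarrow>
    ('a \<Rightarrow> 'l) \<Rightarrow> ('a \<Rightarrow> 'l) \<Rightarrow> 'l" where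
  "frel_quot X E F C1 C2 = F (frep X E C1) (frep X E C2)"

definition frs_iso :: "'a set \<Rightarrow> 'i set \<Rightarrow> ('i \<Rightarrow> 'a \<Rightarrow> 'a \<Rightarrow> 'l) \<Rightarrow>
    'b set \<Rightarrow> ('i \<Rightarrow> 'b \<Rightarrow> 'b \<Rightarrow> 'l) \<Rightarrow> bool" where
  "frs_iso X I V Y W \<longleftrightarrow> (\<exists>\<phi>. bij_betw \<phi> X Y \<and>
     (\<forall>i\<in>I. \<forall>x1\<in>X. \<forall>x2\<in>X. V i x1 x2 = W i (\<phi> x1) (\<phi> x2)))"

end

theory Submission
  imports Defs
begin

abbreviation "crl tens res \<equiv> complete_residuated_lattice tens res"

lemma crl_top_left: "crl tens res \<Longrightarrow> tens top a = a"
  unfolding complete_residuated_lattice_def by metis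

lemma crl_mono1: assumes "crl tens res" "a \<le> b" shows "tens a c \<le> tens b c"
proof -
  have adj: "\<And>a b c. tens a b \<le> c \<longleftrightarrow> a \<le> res b c"
    using assms unfolding complete_residuated_lattice_def by blast
  have "b \<le> res c (tens b c)" using adj by blast
  then have "a \<le> res c (tens b c)" using assms(2) by (rule order_trans[rotated])
  then show ?thesis using adj by blast
qed

lemma crl_mono: assumes "crl tens res" "a \<le> b" "c \<le> d" shows "tens a c \<le> tens b d"
proof -
  have "tens a c \<le> tens b c" using crl_mono1[OF assms(1,2)] .
  also have "tens b c = tens c b" using assms(1) unfolding complete_residuated_lattice_def by metis
  also have "\<dots> \<le> tens d b" using crl_mono1[OF assms(1,3)] .
  also have "\<dots> = tens b d" using assms(1) unfolding complete_residuated_lattice_def by metis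
  finally show ?thesis .
qed

lemma sup_distL: assumes "crl tens res"
  shows "tens (SUP x\<in>S. f x) c = (SUP x\<in>S. tens (f x) c)"
proof (rule antisym)
  have adj: "\<And>a b c. tens a b \<le> c \<longleftrightarrow> a \<le> res b c"
    using assms unfolding complete_residuated_lattice_def by blast
  show "tens (SUP x\<in>S. f x) c \<le> (SUP x\<in>S. tens (f x) c)"
    unfolding adj by (rule SUP_least, rule iffD1[OF adj], rule SUP_upper)
  show "(SUP x\<in>S. tens (f x) c) \<le> tens (SUP x\<in>S. f x) c"
    by (rule SUP_least) (rule crl_mono1[OF assms], simp add: SUP_upper)
qed

lemma sup_distR: assumes "crl tens res"
  shows "tens c (SUP x\<in>S. f x) = (SUP x\<in>S. tens c (f x))"
proof -
  have comm: "\<And>a b. tens a b = tens b a"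
    using assms unfolding complete_residuated_lattice_def by blast
  show ?thesis by (simp add: comm[of c] sup_distL[OF assms])
qed

lemma rcomp_assoc: assumes "crl tens res"
  shows "rcomp tens X (rcomp tens X R S) T x w = rcomp tens X R (rcomp tens X S T) x w"
proof -
  have ass: "\<And>a b c. tens (tens a b) c = tens a (tens b c)"
    using assms unfolding complete_residuated_lattice_def by blast
  have "rcomp tens X (rcomp tens X R S) T x w = (SUP z\<in>X. SUP y\<in>X. tens (R x y) (tens (S y z) (T z w)))"
    unfolding rcomp_def by (simp add: sup_distL[OF assms] ass)
  also have "\<dots> = (SUP y\<in>X. SUP z\<in>X. tens (R x y) (tens (S y z) (T z w)))"
    by (rule SUP_commute)
  also have "\<dots> = rcomp tens X R (rcomp tens X S T) x w"
    unfolding rcomp_def by (simp add: sup_distR[OF assms])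
  finally show ?thesis .
qed

lemma rcomp_cong: "\<forall>x\<in>X. \<forall>y\<in>X. R x y = R' x y \<Longrightarrow> \<forall>x\<in>X. \<forall>y\<in>X. S x y = S' x y
  \<Longrightarrow> x \<in> X \<Longrightarrow> z \<in> X \<Longrightarrow> rcomp tens X R S x z = rcomp tens X R' S' x z"
  unfolding rcomp_def by (auto intro!: SUP_cong)

lemma rcomp_left_cong: "\<forall>u\<in>X. R x u = R x' u \<Longrightarrow> rcomp tens X R S x z = rcomp tens X R S x' z"
  unfolding rcomp_def by (auto intro!: SUP_cong)

lemma rcomp_right_cong: "\<forall>u\<in>X. S u z = S u z' \<Longrightarrow> rcomp tens X R S x z = rcomp tens X R S x z'"
  unfolding rcomp_def by (auto intro!: SUP_cong)

lemma FE: assumes "crl tens res" "fuzzy_equivalence tens A E" "fuzzy_equivalence tens A F"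
  "\<forall>x\<in>A. \<forall>y\<in>A. E x y \<le> F x y" "x \<in> A" "z \<in> A"
  shows "rcomp tens A F E x z = F x z"
  unfolding rcomp_def
proof (rule antisym)
  have idr: "\<And>a. tens a top = a" using assms(1) unfolding complete_residuated_lattice_def by blast
  show "(SUP y\<in>A. tens (F x y) (E y z)) \<le> F x z"
  proof (rule SUP_least)
    fix y assume y: "y \<in> A"
    have "E y z \<le> F y z" using assms(4,6) y by blast
    then have "tens (F x y) (E y z) \<le> tens (F x y) (F y z)"
      by (rule crl_mono[OF assms(1) order_refl])
    also have "\<dots> \<le> F x z" using assms(3,5,6) y unfolding fuzzy_equivalence_def by blast
    finally show "tens (F x y) (E y z) \<le> F x z" .
  qed
  have "tens (F x z) (E z z) \<le> (SUP y\<in>A. tens (F x y) (E y z))"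
    by (rule SUP_upper[OF assms(6)])
  moreover have "E z z = top" using assms(2,6) unfolding fuzzy_equivalence_def by blast
  ultimately show "F x z \<le> (SUP y\<in>A. tens (F x y) (E y z))" using idr by simp
qed

lemma EF: assumes "crl tens res" "fuzzy_equivalence tens A E" "fuzzy_equivalence tens A F"
  "\<forall>x\<in>A. \<forall>y\<in>A. E x y \<le> F x y" "x \<in> A" "z \<in> A"
  shows "rcomp tens A E F x z = F x z"
  unfolding rcomp_def
proof (rule antisym)
  show "(SUP y\<in>A. tens (E x y) (F y z)) \<le> F x z"
  proof (rule SUP_least)
    fix y assume y: "y \<in> A"
    have "E x y \<le> F x y" using assms(4,5) y by blast
    then have "tens (E x y) (F y z) \<le> tens (F x y) (F y z)"
      by (rule crl_mono[OF assms(1) _ order_refl])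
    also have "\<dots> \<le> F x z" using assms(3,5,6) y unfolding fuzzy_equivalence_def by blast
    finally show "tens (E x y) (F y z) \<le> F x z" .
  qed
  have "tens (E x x) (F x z) \<le> (SUP y\<in>A. tens (E x y) (F y z))"
    by (rule SUP_upper[OF assms(5)])
  moreover have "E x x = top" using assms(2,5) unfolding fuzzy_equivalence_def by blast
  ultimately show "F x z \<le> (SUP y\<in>A. tens (E x y) (F y z))" using crl_top_left[OF assms(1)] by simp
qed

lemma class_eq: assumes "crl tens res" "fuzzy_equivalence tens X E" "x \<in> X" "y \<in> X"
  shows "fclass X E x = fclass X E y \<longleftrightarrow> E x y = top"
proof
  assume "fclass X E x = fclass X E y"
  then have "fclass X E x y = fclass X E y y" by simp
  then show "E x y = top" using assms unfolding fclass_def fuzzy_equivalence_def by simp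
next
  assume h: "E x y = top"
  have h2: "E y x = top" using h assms unfolding fuzzy_equivalence_def by metis
  show "fclass X E x = fclass X E y"
  proof
    fix u show "fclass X E x u = fclass X E y u"
    proof (cases "u \<in> X")
      case True
      have "tens (E y x) (E x u) \<le> E y u" "tens (E x y) (E y u) \<le> E x u"
        using assms True unfolding fuzzy_equivalence_def by blast+
      then have "E x u = E y u" using h h2 crl_top_left[OF assms(1)] by (simp add: antisym)
      then show ?thesis unfolding fclass_def by simp
    qed (simp add: fclass_def)
  qed
qed

lemma class_val: "fclass X E x = fclass X E y \<Longrightarrow> u \<in> X \<Longrightarrow> E x u = E y u"
proof -
  assume "fclass X E x = fclass X E y" "u \<in> X"
  then show ?thesis using fun_cong[of "fclass X E x" "fclass X E y" u] unfolding fclass_def by simp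
qed

lemma frep_class: "x \<in> X \<Longrightarrow> frep X E (fclass X E x) \<in> X \<and> fclass X E (frep X E (fclass X E x)) = fclass X E x"
  unfolding frep_def by (rule someI[of _ x]) simp


lemma SUP_img: "(SUP y\<in>f`A. g y) = (SUP x\<in>A. g (f x))"
  by (simp add: image_image)

lemma compat: assumes "\<forall>v\<in>A. K x v = K x' v" "\<forall>v\<in>A. K v y = K v y'"
  shows "rcomp tens A (rcomp tens A K V) K x y = rcomp tens A (rcomp tens A K V) K x' y'"
proof -
  have "\<forall>u\<in>A. rcomp tens A K V x u = rcomp tens A K V x' u"
    using assms(1) by (auto intro: rcomp_left_cong)
  then have "rcomp tens A (rcomp tens A K V) K x y = rcomp tens A (rcomp tens A K V) K x' y"
    by (rule rcomp_left_cong)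
  also have "\<dots> = rcomp tens A (rcomp tens A K V) K x' y'"
    using assms(2) by (rule rcomp_right_cong)
  finally show ?thesis .
qed

lemma chain: assumes crl: "crl tens res" and eq: "fuzzy_equivalence tens A E" "fuzzy_equivalence tens A F"
  "\<forall>x\<in>A. \<forall>y\<in>A. E x y \<le> F x y" and b: "b1 \<in> A" "b2 \<in> A"
  shows "rcomp tens A (rcomp tens A F (rcomp tens A (rcomp tens A E V) E)) F b1 b2
       = rcomp tens A (rcomp tens A F V) F b1 b2"
proof -
  let ?EV = "rcomp tens A E V"
  have s2: "\<forall>x\<in>A. \<forall>z\<in>A. rcomp tens A (rcomp tens A ?EV E) F x z = rcomp tens A E (rcomp tens A V F) x z"
  proof (intro ballI)
    fix x z assume xz: "x \<in> A" "z \<in> A"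
    have "rcomp tens A (rcomp tens A ?EV E) F x z = rcomp tens A ?EV (rcomp tens A E F) x z"
      by (rule rcomp_assoc[OF crl])
    also have "\<dots> = rcomp tens A ?EV F x z"
      by (rule rcomp_cong) (auto simp: EF[OF crl eq] xz)
    also have "\<dots> = rcomp tens A E (rcomp tens A V F) x z"
      by (rule rcomp_assoc[OF crl])
    finally show "rcomp tens A (rcomp tens A ?EV E) F x z = rcomp tens A E (rcomp tens A V F) x z" .
  qed
  have "rcomp tens A (rcomp tens A F (rcomp tens A ?EV E)) F b1 b2
      = rcomp tens A F (rcomp tens A (rcomp tens A ?EV E) F) b1 b2"
    by (rule rcomp_assoc[OF crl])
  also have "\<dots> = rcomp tens A F (rcomp tens A E (rcomp tens A V F)) b1 b2"
    by (rule rcomp_cong) (auto simp: s2 b)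
  also have "\<dots> = rcomp tens A (rcomp tens A F E) (rcomp tens A V F) b1 b2"
    by (rule rcomp_assoc[OF crl, symmetric])
  also have "\<dots> = rcomp tens A F (rcomp tens A V F) b1 b2"
    by (rule rcomp_cong) (auto simp: FE[OF crl eq] b)
  also have "\<dots> = rcomp tens A (rcomp tens A F V) F b1 b2"
    by (rule rcomp_assoc[OF crl, symmetric])
  finally show ?thesis .
qed

theorem theorem6p3:
  fixes tens res :: "'l::complete_lattice \<Rightarrow> 'l \<Rightarrow> 'l"
    and A :: "'a set" and I :: "'i set"
    and V :: "'i \<Rightarrow> 'a \<Rightarrow> 'a \<Rightarrow> 'l" and E F :: "'a \<Rightarrow> 'a \<Rightarrow> 'l"
  assumes "complete_residuated_lattice tens res"
    and "A \<noteq> {}" and "I \<noteq> {}"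
    and "fuzzy_equivalence tens A E" and "fuzzy_equivalence tens A F"
    and "\<forall>x\<in>A. \<forall>y\<in>A. E x y \<le> F x y"
  shows "(\<forall>a1\<in>A. \<forall>a2\<in>A. frel_quot A E F (fclass A E a1) (fclass A E a2) = F a1 a2)
    \<and> fuzzy_equivalence tens (fquot A E) (frel_quot A E F)
    \<and> frs_iso (fquot (fquot A E) (frel_quot A E F)) I
          (\<lambda>i. qrel tens (fquot A E) (frel_quot A E F) (qrel tens A E (V i)))
          (fquot A F) (\<lambda>i. qrel tens A F (V i))"
proof -
  note crl = assms(1)
  note eqE = assms(4) and eqF = assms(5) and le = assms(6)
  have Fsym: "\<And>x y. x \<in> A \<Longrightarrow> y \<in> A \<Longrightarrow> F x y = F y x"
    using eqF unfolding fuzzy_equivalence_def by blast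
  have Esym: "\<And>x y. x \<in> A \<Longrightarrow> y \<in> A \<Longrightarrow> E x y = E y x"
    using eqE unfolding fuzzy_equivalence_def by blast
  have Ftop: "\<And>x y. x \<in> A \<Longrightarrow> y \<in> A \<Longrightarrow> F x y = top \<Longrightarrow> (\<forall>v\<in>A. F x v = F y v)"
  proof -
    fix x y assume "x \<in> A" "y \<in> A" "F x y = top"
    then have "fclass A F x = fclass A F y" using class_eq[OF crl eqF] by blast
    then show "\<forall>v\<in>A. F x v = F y v" using class_val by metis
  qed
  have Frep: "\<And>a. a \<in> A \<Longrightarrow> frep A E (fclass A E a) \<in> A \<and> (\<forall>v\<in>A. F (frep A E (fclass A E a)) v = F a v)"
  proof -
    fix a assume a: "a \<in> A"
    define r where "r = frep A E (fclass A E a)"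
    have r: "r \<in> A" "fclass A E r = fclass A E a" using frep_class[OF a] unfolding r_def by auto
    then have "E r a = top" using class_eq[OF crl eqE r(1) a] by blast
    then have "F r a = top" using le r(1) a by (metis top_unique)
    then show "frep A E (fclass A E a) \<in> A \<and> (\<forall>v\<in>A. F (frep A E (fclass A E a)) v = F a v)"
      using Ftop[OF r(1) a] r(1) unfolding r_def by blast
  qed
  have Erep: "\<And>a v. a \<in> A \<Longrightarrow> v \<in> A \<Longrightarrow> E (frep A E (fclass A E a)) v = E a v"
    using frep_class class_val by metis
  have P1: "\<forall>a1\<in>A. \<forall>a2\<in>A. frel_quot A E F (fclass A E a1) (fclass A E a2) = F a1 a2"
  proof (intro ballI)
    fix a1 a2 assume a: "a1 \<in> A" "a2 \<in> A"
    let ?r1 = "frep A E (fclass A E a1)" and ?r2 = "frep A E (fclass A E a2)"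
    have "F ?r1 ?r2 = F a1 ?r2" using Frep a by blast
    also have "\<dots> = F ?r2 a1" using Fsym Frep a by blast
    also have "\<dots> = F a2 a1" using Frep a by blast
    also have "\<dots> = F a1 a2" using Fsym a by blast
    finally show "frel_quot A E F (fclass A E a1) (fclass A E a2) = F a1 a2"
      unfolding frel_quot_def .
  qed
  let ?Q = "fquot A E" and ?G = "frel_quot A E F"
  have P2: "fuzzy_equivalence tens ?Q ?G"
    using eqF P1 unfolding fuzzy_equivalence_def fquot_def by auto
  have R: "\<And>a. a \<in> A \<Longrightarrow> \<exists>b\<in>A. frep ?Q ?G (fclass ?Q ?G (fclass A E a)) = fclass A E b \<and> F b a = top"
  proof -
    fix a assume a: "a \<in> A"
    have aQ: "fclass A E a \<in> ?Q" unfolding fquot_def using a by blast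
    note fr = frep_class[OF aQ, of ?G]
    then obtain b where b: "b \<in> A" "frep ?Q ?G (fclass ?Q ?G (fclass A E a)) = fclass A E b"
      unfolding fquot_def by blast
    have bQ: "fclass A E b \<in> ?Q" unfolding fquot_def using b by blast
    have "?G (fclass A E b) (fclass A E a) = top"
      using class_eq[OF crl P2 bQ aQ] fr b by simp
    then show "\<exists>b\<in>A. frep ?Q ?G (fclass ?Q ?G (fclass A E a)) = fclass A E b \<and> F b a = top"
      using P1 a b by auto
  qed
  define \<phi> where "\<phi> C = fclass A F (frep A E (frep ?Q ?G C))" for C
  have phi: "\<And>a. a \<in> A \<Longrightarrow> \<phi> (fclass ?Q ?G (fclass A E a)) = fclass A F a"
  proof -
    fix a assume a: "a \<in> A"
    obtain b where b: "b \<in> A" "frep ?Q ?G (fclass ?Q ?G (fclass A E a)) = fclass A E b" "F b a = top"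
      using R[OF a] by blast
    let ?r = "frep A E (fclass A E b)"
    have "?r \<in> A" "F ?r a = F b a" using Frep[OF b(1)] a by auto
    then have "fclass A F ?r = fclass A F a" using class_eq[OF crl eqF _ a] b(3) by simp
    then show "\<phi> (fclass ?Q ?G (fclass A E a)) = fclass A F a" unfolding \<phi>_def b(2) .
  qed
  have Gclass: "\<And>a1 a2. a1 \<in> A \<Longrightarrow> a2 \<in> A \<Longrightarrow>
      fclass ?Q ?G (fclass A E a1) = fclass ?Q ?G (fclass A E a2) \<longleftrightarrow> F a1 a2 = top"
  proof -
    fix a1 a2 assume a: "a1 \<in> A" "a2 \<in> A"
    have "fclass A E a1 \<in> ?Q" "fclass A E a2 \<in> ?Q" unfolding fquot_def using a by auto
    then show "fclass ?Q ?G (fclass A E a1) = fclass ?Q ?G (fclass A E a2) \<longleftrightarrow> F a1 a2 = top"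
      using class_eq[OF crl P2] P1 a by simp
  qed
  have QG: "fquot ?Q ?G = (\<lambda>a. fclass ?Q ?G (fclass A E a)) ` A"
    unfolding fquot_def[of ?Q] unfolding fquot_def by (simp add: image_image)
  have bij: "bij_betw \<phi> (fquot ?Q ?G) (fquot A F)"
  proof (rule bij_betwI')
    fix x y assume "x \<in> fquot ?Q ?G" "y \<in> fquot ?Q ?G"
    then obtain a1 a2 where a: "a1 \<in> A" "a2 \<in> A" "x = fclass ?Q ?G (fclass A E a1)"
      "y = fclass ?Q ?G (fclass A E a2)" unfolding QG by blast
    show "(\<phi> x = \<phi> y) = (x = y)"
      using a phi Gclass class_eq[OF crl eqF] by simp
  next
    fix x assume "x \<in> fquot ?Q ?G"
    then obtain a where a: "a \<in> A" "x = fclass ?Q ?G (fclass A E a)" unfolding QG by blast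
    show "\<phi> x \<in> fquot A F" using a phi unfolding fquot_def by simp
  next
    fix y assume "y \<in> fquot A F"
    then obtain a where a: "a \<in> A" "y = fclass A F a" unfolding fquot_def by blast
    show "\<exists>x\<in>fquot ?Q ?G. y = \<phi> x" using a phi unfolding QG by auto
  qed
  have rel: "qrel tens ?Q ?G (qrel tens A E (V i)) x1 x2 = qrel tens A F (V i) (\<phi> x1) (\<phi> x2)"
    if x: "x1 \<in> fquot ?Q ?G" "x2 \<in> fquot ?Q ?G" for i x1 x2
  proof -
    obtain a1 a2 where a: "a1 \<in> A" "a2 \<in> A" "x1 = fclass ?Q ?G (fclass A E a1)"
      "x2 = fclass ?Q ?G (fclass A E a2)" using x unfolding QG by blast
    obtain b1 where b1: "b1 \<in> A" "frep ?Q ?G x1 = fclass A E b1" "F b1 a1 = top"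
      using R[OF a(1)] a(3) by blast
    obtain b2 where b2: "b2 \<in> A" "frep ?Q ?G x2 = fclass A E b2" "F b2 a2 = top"
      using R[OF a(2)] a(4) by blast
    let ?EVE = "rcomp tens A (rcomp tens A E (V i)) E"
    let ?FVF = "rcomp tens A (rcomp tens A F (V i)) F"
    have Wq: "qrel tens A E (V i) (fclass A E c) (fclass A E d) = ?EVE c d"
      if "c \<in> A" "d \<in> A" for c d
      unfolding qrel_def
      by (rule compat) (use that Erep Esym frep_class in metis)+
    have "qrel tens ?Q ?G (qrel tens A E (V i)) x1 x2
        = rcomp tens ?Q (rcomp tens ?Q ?G (qrel tens A E (V i))) ?G (fclass A E b1) (fclass A E b2)"
      unfolding qrel_def[of tens ?Q] b1(2) b2(2) ..
    also have "\<dots> = rcomp tens A (rcomp tens A F ?EVE) F b1 b2"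
      unfolding rcomp_def[of tens ?Q] rcomp_def[of tens A "rcomp tens A F ?EVE" F] rcomp_def[of tens A F ?EVE]
      unfolding fquot_def SUP_img
      by (rule SUP_cong[OF refl]) (simp add: P1 Wq b1 b2 cong: SUP_cong)
    also have "\<dots> = ?FVF b1 b2" by (rule chain[OF crl eqE eqF le b1(1) b2(1)])
    also have "\<dots> = qrel tens A F (V i) (\<phi> x1) (\<phi> x2)"
    proof -
      have p: "\<phi> x1 = fclass A F b1" "\<phi> x2 = fclass A F b2"
        using phi a class_eq[OF crl eqF] b1 b2 Fsym by auto
      have "\<forall>v\<in>A. F (frep A F (fclass A F b1)) v = F b1 v" "\<forall>v\<in>A. F (frep A F (fclass A F b2)) v = F b2 v"
        using frep_class class_val b1(1) b2(1) by metis+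
      then show ?thesis unfolding qrel_def p
        by (intro compat) (use b1(1) b2(1) Fsym frep_class in metis)+
    qed
    finally show ?thesis .
  qed
  show ?thesis
    using P1 P2 bij rel unfolding frs_iso_def by blast
qed

end
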